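(* For every $g\ge 1$, $\det(A_{g+1})=4[\det(A_g)]^2[\det(K_g)]^2$.
   Context: The graphs $\mathcal{H}_g$ with hubs $v_1,v_2,v_3,v_4$ and orientations $\mathcal{H}_g^e$ are defined recursively. $\mathcal{H}_1$ is the 4-cycle with edges $\{v_1,v_2\},\{v_1,v_3\},\{v_2,v_4\},\{v_3,v_4\}$, oriented $v_1\to v_2$, $v_1\to v_3$, $v_4\to v_2$, $v_3\to v_4$. For $g>1$, take four disjoint copies $\mathcal{H}_{g-1}^{(i)}$, $i=1,\dots,4$, of $\mathcal{H}_{g-1}$, each oriented as a copy of $\mathcal{H}_{g-1}^e$, with hubs $v_k^{(i)}$; identify $v_1^{(1)},v_1^{(4)}$ as $v_1$, $v_2^{(2)},v_1^{(3)}$ as $v_4$, $v_2^{(1)},v_1^{(2)}$ as $v_3$, and $v_2^{(3)},v_2^{(4)}$ as $v_2$; $\mathcal{H}_g^e$ is the union of the copies' orientations. $A_g$ is the skew adjacency matrix of $\mathcal{H}_g^e$: its $(u,v)$ entry is $1$ if $u\to v$ is an arc, $-1$ if $v\to u$ is an arc, and $0$ otherwise. $K_g$ is the submatrix of $A_g$ obtained by deleting the rows and columns corresponding to $v_1$ and $v_2$. *)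

theory Defs
  imports "Jordan_Normal_Form.Determinant"
begin

text \<open>Vertices of H_g are the naturals 0 ..< nv g.  Hubs: v1 = 0, v2 = 1, v3 = 2, v4 = 3.
  The index g \<ge> 1 is used as in the paper; g = 0 is a dummy.\<close>

fun nv :: "nat \<Rightarrow> nat" where
  "nv 0 = 0"
| "nv (Suc 0) = 4"
| "nv (Suc (Suc g)) = 4 * nv (Suc g) - 4"

text \<open>Image of hub v_{k+1} (k = 0,1) of copy i+1 in the next graph:
  copy 1: v1->v1, v2->v3; copy 2: v1->v3, v2->v4; copy 3: v1->v4, v2->v2; copy 4: v1->v1, v2->v2.
  Only hubs v1, v2 of a copy are identified; its other vertices (incl. its v3,v4) stay distinct.\<close>

definition hub_img :: "nat \<Rightarrow> nat \<Rightarrow> nat" where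
  "hub_img i k = [[0,2],[2,3],[3,1],[0,1::nat]] ! i ! k"

definition emb :: "nat \<Rightarrow> nat \<Rightarrow> nat \<Rightarrow> nat" where
  "emb g i u = (if u < 2 then hub_img i u else 4 + i * (nv g - 2) + (u - 2))"

fun arc :: "nat \<Rightarrow> nat \<Rightarrow> nat \<Rightarrow> bool" where
  "arc 0 x y = False"
| "arc (Suc 0) x y = ((x,y) \<in> {(0,1),(0,2),(3,1),(2,3)})"
| "arc (Suc (Suc g)) x y =
     (\<exists>i<4. \<exists>u<nv (Suc g). \<exists>w<nv (Suc g).
        arc (Suc g) u w \<and> x = emb (Suc g) i u \<and> y = emb (Suc g) i w)"

definition skewA :: "nat \<Rightarrow> int mat" where
  "skewA g = mat (nv g) (nv g)
     (\<lambda>(x,y). if arc g x y then 1 else if arc g y x then -1 else 0)"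

definition Kmat :: "nat \<Rightarrow> int mat" where
  "Kmat g = mat (nv g - 2) (nv g - 2) (\<lambda>(x,y). skewA g $$ (x+2, y+2))"

end

theory Submission
  imports Defs
begin

lemma i4: "(i::nat) < 4 \<longleftrightarrow> i = 0 \<or> i = 1 \<or> i = 2 \<or> i = 3" by auto
lemma k2: "(k::nat) < 2 \<longleftrightarrow> k = 0 \<or> k = 1" by auto

lemma nv_ge: "0 < G \<Longrightarrow> 4 \<le> nv G"
proof (induction G)
  case (Suc G) then show ?case by (cases G) auto
qed simp

lemma nv_Suc: "0 < G \<Longrightarrow> nv (Suc G) = 4 * nv G - 4"
  by (cases G) auto

lemma nv_even: "0 < G \<Longrightarrow> even (nv G)"
proof (induction G)
  case (Suc G) then show ?case by (cases G) auto
qed simp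

lemma arc_step: "0 < G \<Longrightarrow> arc (Suc G) x y = (\<exists>i<4. \<exists>u<nv G. \<exists>w<nv G.
        arc G u w \<and> x = emb G i u \<and> y = emb G i w)"
  by (cases G) auto

lemma hub_img_lt: "i < 4 \<Longrightarrow> k < 2 \<Longrightarrow> hub_img i k < 4"
  unfolding i4 k2 by (auto simp: hub_img_def)

lemma hub_img_inj: "i < 4 \<Longrightarrow> k < 2 \<Longrightarrow> l < 2 \<Longrightarrow> hub_img i k = hub_img i l \<Longrightarrow> k = l"
  unfolding i4 k2 by (auto simp: hub_img_def)

lemma hub_pair: "i < 4 \<Longrightarrow> j < 4 \<Longrightarrow> u < 2 \<Longrightarrow> w < 2 \<Longrightarrow> u' < 2 \<Longrightarrow> w' < 2 \<Longrightarrow> u \<noteq> w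
  \<Longrightarrow> hub_img i u = hub_img j u' \<Longrightarrow> hub_img i w = hub_img j w' \<Longrightarrow> i = j"
  unfolding i4 k2 by (auto simp: hub_img_def)

lemma emb_ge: "2 \<le> u \<Longrightarrow> 4 \<le> emb G' i u" by (simp add: emb_def)

lemma emb_lt: assumes "i < 4" "u < nv G'" "4 \<le> nv G'" shows "emb G' i u < 4 * nv G' - 4"
proof (cases "u < 2")
  case True then show ?thesis using hub_img_lt[OF assms(1) True] assms by (simp add: emb_def)
next
  case False
  define n where "n = nv G'"
  have e: "emb G' i u = 4 + i * (n - 2) + (u - 2)" using False by (simp add: emb_def n_def)
  have "i * (n - 2) \<le> 3 * (n - 2)" using assms by simp
  moreover have "u - 2 < n - 2" "4 * n - 4 = 4 + 4 * (n - 2)" using False assms by (auto simp: n_def)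
  ultimately show ?thesis unfolding e n_def[symmetric] by linarith
qed

lemma divmod_uniq: assumes "a < (m::nat)" "b < m" "i * m + a = j * m + b" shows "i = j \<and> a = b"
proof -
  have "(i*m+a) div m = i" "(j*m+b) div m = j" using assms(1,2) by auto
  then have "i = j" using assms(3) by metis
  then show ?thesis using assms by simp
qed

lemma emb_hub: "u < 2 \<Longrightarrow> emb G i u = hub_img i u" by (simp add: emb_def)

lemma emb_cross: assumes "i < 4" "j < 4" "u < nv G" "v < nv G" "4 \<le> nv G" "emb G i u = emb G j v"
  shows "(i = j \<and> u = v) \<or> (u < 2 \<and> v < 2)"
proof (cases "u < 2")
  case True
  show ?thesis
  proof (cases "v < 2")
    case False
    then show ?thesis using True assms hub_img_lt[OF assms(1) True] emb_ge[of v G j] emb_hub[OF True, of G i] by simp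
  qed (use True in simp)
next
  case False
  show ?thesis
  proof (cases "v < 2")
    case True
    then show ?thesis using False assms hub_img_lt[OF assms(2) True] emb_ge[of u G i] emb_hub[OF True, of G j] by simp
  next
    case F2: False
    have "i * (nv G - 2) + (u - 2) = j * (nv G - 2) + (v - 2)" using assms(6) False F2 by (simp add: emb_def)
    moreover have "u - 2 < nv G - 2" "v - 2 < nv G - 2" using assms False F2 by auto
    ultimately have "i = j \<and> u - 2 = v - 2" using divmod_uniq by blast
    then show ?thesis using False F2 by auto
  qed
qed

lemma emb_inj: assumes "i < 4" "u < nv G" "v < nv G" "4 \<le> nv G" "emb G i u = emb G i v" shows "u = v"
proof -
  from emb_cross[OF assms(1,1,2,3,4,5)] have "u = v \<or> (u < 2 \<and> v < 2)" by blast
  then show ?thesis using hub_img_inj[OF assms(1)] assms(5) emb_hub by metis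
qed

lemma arc_lt: "0 < G \<Longrightarrow> arc G x y \<Longrightarrow> x < nv G \<and> y < nv G"
proof (induction G arbitrary: x y)
  case (Suc G)
  show ?case
  proof (cases "G = 0")
    case True then show ?thesis using Suc by auto
  next
    case False
    then obtain i u w where "i < 4" "u < nv G" "w < nv G" "x = emb G i u" "y = emb G i w"
      using Suc.prems arc_step by auto
    then show ?thesis using emb_lt nv_ge nv_Suc False by simp
  qed
qed simp

lemma arc1: "arc (Suc 0) x y \<longleftrightarrow> (x=0\<and>y=1) \<or> (x=0\<and>y=2) \<or> (x=3\<and>y=1) \<or> (x=2\<and>y=3)"
  by (simp only: arc.simps insert_iff empty_iff prod.inject simp_thms)

lemma arc1_anti: "\<not> (arc (Suc 0) x y \<and> arc (Suc 0) y x)" unfolding arc1 by linarith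

lemma arc_antisym: "0 < G \<Longrightarrow> \<not> (arc G x y \<and> arc G y x)"
proof (induction G arbitrary: x y)
  case (Suc G)
  show ?case
  proof (cases "G = 0")
    case True then show ?thesis using arc1_anti by simp
  next
    case False
    have IH: "\<not> (arc G a b \<and> arc G b a)" for a b using Suc.IH False by simp
    have G0: "0 < G" using False by simp
    have n4: "4 \<le> nv G" using nv_ge G0 by simp
    show ?thesis
    proof
      assume H: "arc (Suc G) x y \<and> arc (Suc G) y x"
      from H have "arc (Suc G) x y" by simp
      then obtain i u w where h1: "i < 4" "u < nv G" "w < nv G" "arc G u w" "x = emb G i u" "y = emb G i w"
        unfolding arc_step[OF G0] by auto
      from H have "arc (Suc G) y x" by simp
      then obtain j u' w' where h2: "j < 4" "u' < nv G" "w' < nv G" "arc G u' w'" "y = emb G j u'" "x = emb G j w'"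
        unfolding arc_step[OF G0] by auto
      have ex: "emb G i u = emb G j w'" using h1(5) h2(6) by simp
      have ey: "emb G i w = emb G j u'" using h1(6) h2(5) by simp
      note c1 = emb_cross[OF h1(1) h2(1) h1(2) h2(3) n4 ex]
      note c2 = emb_cross[OF h1(1) h2(1) h1(3) h2(2) n4 ey]
      show False
      proof (cases "i = j")
        case True
        have "emb G i u = emb G i w'" "emb G i w = emb G i u'" using ex ey True by simp_all
        then have "u = w'" "w = u'" using emb_inj[OF h1(1) h1(2) h2(3) n4] emb_inj[OF h1(1) h1(3) h2(2) n4] by simp_all
        then show False using IH[of u w] h1(4) h2(4) by simp
      next
        case ne: False
        then have s: "u < 2" "w' < 2" "w < 2" "u' < 2" using c1 c2 by auto
        show False
        proof (cases "u = w")
          case True then show False using IH[of u w] h1(4) by simp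
        next
          case False
          have "hub_img i u = hub_img j w'" using ex emb_hub[OF s(1)] emb_hub[OF s(2)] by simp
          moreover have "hub_img i w = hub_img j u'" using ey emb_hub[OF s(3)] emb_hub[OF s(4)] by simp
          ultimately show False using hub_pair[OF h1(1) h2(1) s(1,3,2,4) False] ne by simp
        qed
      qed
    qed
  qed
qed simp

lemma arc_same: assumes "0 < G" "i < 4" "u < nv G" "w < nv G"
  shows "arc (Suc G) (emb G i u) (emb G i w) = arc G u w"
proof
  assume "arc G u w" then show "arc (Suc G) (emb G i u) (emb G i w)"
    unfolding arc_step[OF assms(1)] using assms by blast
next
  have n4: "4 \<le> nv G" using nv_ge assms by simp
  assume "arc (Suc G) (emb G i u) (emb G i w)"
  then obtain j u' w' where h: "j < 4" "u' < nv G" "w' < nv G" "arc G u' w'"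
     "emb G i u = emb G j u'" "emb G i w = emb G j w'" unfolding arc_step[OF assms(1)] by auto
  note c1 = emb_cross[OF assms(2) h(1) assms(3) h(2) n4 h(5)]
  note c2 = emb_cross[OF assms(2) h(1) assms(4) h(3) n4 h(6)]
  show "arc G u w"
  proof (cases "i = j")
    case True
    have "emb G i u = emb G i u'" "emb G i w = emb G i w'" using h(5,6) True by simp_all
    then have "u = u'" "w = w'" using emb_inj[OF assms(2,3) h(2) n4] emb_inj[OF assms(2,4) h(3) n4] by simp_all
    then show ?thesis using h(4) by simp
  next
    case ne: False
    then have s: "u < 2" "u' < 2" "w < 2" "w' < 2" using c1 c2 by auto
    have e1: "hub_img i u = hub_img j u'" using h(5) emb_hub[OF s(1)] emb_hub[OF s(2)] by simp
    have e2: "hub_img i w = hub_img j w'" using h(6) emb_hub[OF s(3)] emb_hub[OF s(4)] by simp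
    show ?thesis
    proof (cases "u = w")
      case True
      then have "hub_img j u' = hub_img j w'" using e1 e2 by simp
      then have "u' = w'" using hub_img_inj[OF h(1) s(2) s(4)] by simp
      then show ?thesis using h(4) arc_antisym[OF assms(1), of u' w'] by simp
    next
      case False
      then show ?thesis using hub_pair[OF assms(2) h(1) s(1,3,2,4) False e1 e2] ne by simp
    qed
  qed
qed

lemma skewA_idx: "x < nv G \<Longrightarrow> y < nv G \<Longrightarrow>
  skewA G $$ (x,y) = (if arc G x y then 1 else if arc G y x then -1 else 0)"
  by (simp add: skewA_def)

lemma ss2: "\<not> x < 2 \<Longrightarrow> Suc (Suc (x - 2)) = (x::nat)" by simp
lemma s4: "\<not> x < 4 \<Longrightarrow> 4 + (x - 4) = (x::nat)" by simp

lemma skewA_dim[simp]: "dim_row (skewA G) = nv G" "dim_col (skewA G) = nv G" by (simp_all add: skewA_def)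

lemma Kmat_dim[simp]: "dim_row (Kmat G) = nv G - 2" "dim_col (Kmat G) = nv G - 2" by (simp_all add: Kmat_def)

lemma skewA_carrier[simp]: "skewA G \<in> carrier_mat (nv G) (nv G)" by (simp add: skewA_def)

lemma skew_anti: assumes "0 < G" "x < nv G" "y < nv G" shows "skewA G $$ (y,x) = - skewA G $$ (x,y)"
proof -
  have n: "\<not> (arc G x y \<and> arc G y x)" by (rule arc_antisym[OF assms(1)])
  show ?thesis unfolding skewA_idx[OF assms(2,3)] skewA_idx[OF assms(3,2)] using n by auto
qed

lemma skew_diag: "0 < G \<Longrightarrow> x < nv G \<Longrightarrow> skewA G $$ (x,x) = 0"
  using skew_anti[of G x x] by simp

lemma emb_lt': assumes "0 < G" "i < 4" "u < nv G" shows "emb G i u < nv (Suc G)"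
proof -
  have "4 \<le> nv G" using nv_ge assms(1) .
  then have "emb G i u < 4 * nv G - 4" using emb_lt assms(2,3) by blast
  then show ?thesis using nv_Suc[OF assms(1)] by simp
qed

lemma skew_same: assumes "0 < G" "i < 4" "u < nv G" "w < nv G"
  shows "skewA (Suc G) $$ (emb G i u, emb G i w) = skewA G $$ (u,w)"
proof -
  have e1: "arc (Suc G) (emb G i u) (emb G i w) = arc G u w" by (rule arc_same[OF assms])
  have e2: "arc (Suc G) (emb G i w) (emb G i u) = arc G w u" by (rule arc_same[OF assms(1,2,4,3)])
  show ?thesis unfolding skewA_idx[OF emb_lt'[OF assms(1,2,3)] emb_lt'[OF assms(1,2,4)]]
     skewA_idx[OF assms(3,4)] e1 e2 ..
qed

lemma skew_zero: assumes "0 < G" "x < nv (Suc G)" "y < nv (Suc G)"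
  "\<not> (\<exists>i<4. \<exists>u<nv G. \<exists>w<nv G. x = emb G i u \<and> y = emb G i w)"
  shows "skewA (Suc G) $$ (x,y) = 0"
proof -
  have "\<not> arc (Suc G) x y"
  proof
    assume "arc (Suc G) x y"
    then obtain i u w where "i < 4" "u < nv G" "w < nv G" "x = emb G i u" "y = emb G i w"
      unfolding arc_step[OF assms(1)] by auto
    then show False using assms(4) by auto
  qed
  moreover have "\<not> arc (Suc G) y x"
  proof
    assume "arc (Suc G) y x"
    then obtain i u w where "i < 4" "u < nv G" "w < nv G" "y = emb G i u" "x = emb G i w"
      unfolding arc_step[OF assms(1)] by auto
    then show False using assms(4) by auto
  qed
  ultimately show ?thesis unfolding skewA_idx[OF assms(2,3)] by simp
qed

lemma schur_adj: fixes P Q R D X :: "'a::idom mat" and c :: 'a and p q :: nat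
  assumes P: "P \<in> carrier_mat p p" and Q: "Q \<in> carrier_mat p q" and R: "R \<in> carrier_mat q p"
   and D: "D \<in> carrier_mat q q" and X: "X \<in> carrier_mat q q" and DX: "D * X = c \<cdot>\<^sub>m 1\<^sub>m q"
  shows "det (four_block_mat P Q R D) * c^p = det (c \<cdot>\<^sub>m P - Q * X * R) * det D"
proof -
  define E where "E = four_block_mat (c \<cdot>\<^sub>m 1\<^sub>m p) (0\<^sub>m p q) (- (X * R)) (1\<^sub>m q)"
  have XR: "X * R \<in> carrier_mat q p" using X R by simp
  have M: "four_block_mat P Q R D \<in> carrier_mat (p+q) (p+q)" using P D by simp
  have Ec: "E \<in> carrier_mat (p+q) (p+q)" unfolding E_def by simp
  have "det (four_block_mat P Q R D) * det E = det (four_block_mat P Q R D * E)"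
    by (rule det_mult[OF M Ec, symmetric])
  also have "four_block_mat P Q R D * E = four_block_mat
      (P * (c \<cdot>\<^sub>m 1\<^sub>m p) + Q * (- (X * R))) (P * 0\<^sub>m p q + Q * 1\<^sub>m q)
      (R * (c \<cdot>\<^sub>m 1\<^sub>m p) + D * (- (X * R))) (R * 0\<^sub>m p q + D * 1\<^sub>m q)"
    unfolding E_def by (rule mult_four_block_mat[OF P Q R D], insert XR, auto)
  also have "P * (c \<cdot>\<^sub>m 1\<^sub>m p) + Q * (- (X * R)) = c \<cdot>\<^sub>m P - Q * X * R"
  proof -
    have "P * (c \<cdot>\<^sub>m 1\<^sub>m p) = c \<cdot>\<^sub>m P" using mult_smult_distrib[OF P, of "1\<^sub>m p" p c] P by simp
    moreover have "Q * (- (X * R)) = - (Q * X * R)" using Q X R by simp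
    ultimately show ?thesis using minus_add_uminus_mat[of "c \<cdot>\<^sub>m P" p p "Q * X * R"] P Q X R by simp
  qed
  also have "P * 0\<^sub>m p q + Q * 1\<^sub>m q = Q" using P Q by simp
  also have "R * (c \<cdot>\<^sub>m 1\<^sub>m p) + D * (- (X * R)) = 0\<^sub>m q p"
  proof -
    have "R * (c \<cdot>\<^sub>m 1\<^sub>m p) = c \<cdot>\<^sub>m R" using mult_smult_distrib[OF R, of "1\<^sub>m p" p c] R by simp
    moreover have "D * (- (X * R)) = - ((D * X) * R)" using D X R by simp
    moreover have "(D * X) * R = c \<cdot>\<^sub>m R" unfolding DX using mult_smult_assoc_mat[of "1\<^sub>m q" q q R p c] R by simp
    ultimately show ?thesis using R by (intro eq_matI) auto
  qed
  also have "R * 0\<^sub>m p q + D * 1\<^sub>m q = D" using R D by simp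
  also have "det (four_block_mat (c \<cdot>\<^sub>m P - Q * X * R) Q (0\<^sub>m q p) D) = det (c \<cdot>\<^sub>m P - Q * X * R) * det D"
    by (rule det_four_block_mat_lower_left_zero[of _ p _ q], insert P Q X R D, auto)
  also have "det E = c^p" unfolding E_def
    by (subst det_four_block_mat_upper_right_zero[of _ p _ q], insert XR, auto)
  finally show ?thesis .
qed

lemma div_block: assumes "0 < (m::nat)" shows "r div m = i \<longleftrightarrow> i * m \<le> r \<and> r < i * m + m"
proof
  assume h: "r div m = i"
  have "r = i * m + r mod m" using h div_mult_mod_eq[of r m] by simp
  moreover have "r mod m < m" using assms by simp
  ultimately show "i * m \<le> r \<and> r < i * m + m" by linarith
next
  assume h: "i * m \<le> r \<and> r < i * m + m"
  then have "r = i * m + (r - i * m)" "r - i * m < m" by auto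
  then have "r div m = (i * m + (r - i * m)) div m" by simp
  also have "\<dots> = i" using \<open>r - i * m < m\<close> assms by simp
  finally show "r div m = i" .
qed

lemma sum_block_split: fixes F :: "nat \<Rightarrow> 'a::comm_monoid_add" shows "(\<Sum>s<k*m. F s) = (\<Sum>i<k. \<Sum>s'<m. F (i*m+s'))"
proof -
  have "(\<Sum>s<k*m. F s) = (\<Sum>i<k. sum F {i*m..<i*m+m})" using sum.nat_group[of F m k] by simp
  also have "\<dots> = (\<Sum>i<k. \<Sum>s'<m. F (i*m+s'))"
  proof (rule sum.cong[OF refl])
    fix i
    have "sum F {0 + i*m..<m + i*m} = (\<Sum>s'\<in>{0..<m}. F (s' + i*m))" by (rule sum.shift_bounds_nat_ivl)
    then show "sum F {i*m..<i*m+m} = (\<Sum>s'<m. F (i*m+s'))" by (simp add: add.commute atLeast0LessThan)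
  qed
  finally show ?thesis .
qed

lemma sum_block_sel: fixes h :: "nat \<Rightarrow> 'a::comm_monoid_add" and i k m :: nat
  assumes "i < k" "0 < m"
  shows "(\<Sum>r<k*m. if r div m = i then h r else 0) = (\<Sum>r'<m. h (i*m+r'))"
proof -
  have "(\<Sum>r<k*m. if r div m = i then h r else 0) = (\<Sum>i'<k. \<Sum>r'<m. if (i'*m+r') div m = i then h (i'*m+r') else 0)"
    by (rule sum_block_split[where F = "\<lambda>r. if r div m = i then h r else 0"])
  also have "\<dots> = (\<Sum>i'<k. if i' = i then (\<Sum>r'<m. h (i*m+r')) else 0)"
  proof (rule sum.cong[OF refl])
    fix i' assume "i' \<in> {..<k}"
    have d: "(i'*m+r') div m = i'" if "r' < m" for r' using that by simp
    show "(\<Sum>r'<m. if (i'*m+r') div m = i then h (i'*m+r') else 0) = (if i' = i then (\<Sum>r'<m. h (i*m+r')) else 0)"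
      by (cases "i' = i") (auto simp: d)
  qed
  also have "\<dots> = (\<Sum>r'<m. h (i*m+r'))" using assms by simp
  finally show ?thesis .
qed

lemma mat_delete_mat0: "mat_delete (mat (Suc n) (Suc n) f) 0 j =
   mat n n (\<lambda>(i',j'). f (Suc i', if j' < j then j' else Suc j'))"
  unfolding mat_delete_def by (rule eq_matI) auto

lemma det_rec: fixes f :: "nat \<times> nat \<Rightarrow> 'a::comm_ring_1"
  shows "det (mat (Suc n) (Suc n) f) = (\<Sum>j<Suc n. f (0,j) * ((-1)^j *
    det (mat n n (\<lambda>(i',j'). f (Suc i', if j' < j then j' else Suc j')))))"
  by (subst laplace_expansion_row[of _ "Suc n" 0]) (auto simp: cofactor_def mat_delete_mat0)

lemma det0: "det (mat 0 0 f) = 1" by simp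

lemma det2: fixes f :: "nat \<times> nat \<Rightarrow> 'a::comm_ring_1"
  shows "det (mat 2 2 f) = f (0,0) * f (1,1) - f (0,1) * f (1,0)"
  by (simp add: numeral_2_eq_2 det_rec del: mat_delete_mat0)

lemma det4W: fixes z :: "'a::comm_ring_1"
  shows "det (mat 4 4 (\<lambda>(x,y). [[0,z,z,0],[-z,0,0,-z],[-z,0,0,z],[0,z,-z,0]] ! x ! y)) = 4 * z^4"
  by (simp add: numeral_eq_Suc det_rec)

definition bdiag :: "nat \<Rightarrow> nat \<Rightarrow> 'a::zero mat \<Rightarrow> 'a mat" where
  "bdiag k m F = mat (k*m) (k*m) (\<lambda>(s,t). if s div m = t div m then F $$ (s mod m, t mod m) else 0)"

lemma bdiag_carrier[simp]: "bdiag k m F \<in> carrier_mat (k*m) (k*m)" by (simp add: bdiag_def)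

lemma bdiag_dim[simp]: "dim_row (bdiag k m F) = k*m" "dim_col (bdiag k m F) = k*m" by (simp_all add: bdiag_def)

lemma bdiag_idx: "s < k*m \<Longrightarrow> t < k*m \<Longrightarrow>
  bdiag k m F $$ (s,t) = (if s div m = t div m then F $$ (s mod m, t mod m) else 0)"
  by (simp add: bdiag_def)

lemma det_bdiag: fixes F :: "'a::idom mat" assumes F: "F \<in> carrier_mat m m" and m: "0 < m"
  shows "det (bdiag k m F) = det F ^ k"
proof (induction k)
  case 0 show ?case by (simp add: bdiag_def)
next
  case (Suc k)
  have eq: "bdiag (Suc k) m F = four_block_mat F (0\<^sub>m m (k*m)) (0\<^sub>m (k*m) m) (bdiag k m F)"
  proof (rule eq_matI)
    fix i j assume i: "i < dim_row (four_block_mat F (0\<^sub>m m (k*m)) (0\<^sub>m (k*m) m) (bdiag k m F))"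
      and j: "j < dim_col (four_block_mat F (0\<^sub>m m (k*m)) (0\<^sub>m (k*m) m) (bdiag k m F))"
    have i': "i < m + k*m" and j': "j < m + k*m" using i j F by auto
    have r: "four_block_mat F (0\<^sub>m m (k*m)) (0\<^sub>m (k*m) m) (bdiag k m F) $$ (i,j) =
      (if i < m then if j < m then F $$ (i,j) else 0 else if j < m then 0 else bdiag k m F $$ (i - m, j - m))"
      using i' j' F by simp
    have l: "bdiag (Suc k) m F $$ (i,j) = (if i div m = j div m then F $$ (i mod m, j mod m) else 0)"
      using i' j' by (simp add: bdiag_def)
    show "bdiag (Suc k) m F $$ (i,j) = four_block_mat F (0\<^sub>m m (k*m)) (0\<^sub>m (k*m) m) (bdiag k m F) $$ (i,j)"
    proof (cases "i < m"; cases "j < m")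
      assume "i < m" "j < m" then show ?thesis unfolding r l by simp
    next
      assume a: "i < m" "\<not> j < m"
      then have "j div m = Suc ((j - m) div m)" using m le_div_geq by simp
      then show ?thesis using a unfolding r l by simp
    next
      assume a: "\<not> i < m" "j < m"
      then have "i div m = Suc ((i - m) div m)" using m le_div_geq by simp
      then show ?thesis using a unfolding r l by simp
    next
      assume a: "\<not> i < m" "\<not> j < m"
      then have "i div m = Suc ((i - m) div m)" "j div m = Suc ((j - m) div m)"
        "i mod m = (i - m) mod m" "j mod m = (j - m) mod m" using m le_div_geq le_mod_geq by simp_all
      moreover have "i - m < k * m" "j - m < k * m" using a i' j' by auto
      ultimately show ?thesis using a unfolding r l by (simp add: bdiag_idx)
    qed
  qed (use F in auto)
  show ?case unfolding eq
    by (subst det_four_block_mat_upper_right_zero[of F m _ "k*m"], insert F, auto simp: Suc)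
qed

lemma bdiag_mult: fixes F H :: "'a::comm_ring_1 mat"
  assumes F: "F \<in> carrier_mat m m" and H: "H \<in> carrier_mat m m" and m: "0 < m"
  shows "bdiag k m F * bdiag k m H = bdiag k m (F * H)"
proof (rule eq_matI)
  fix s t assume s: "s < dim_row (bdiag k m (F * H))" and t: "t < dim_col (bdiag k m (F * H))"
  then have s: "s < k*m" and t: "t < k*m" using F H by (auto simp: bdiag_def)
  have sk: "s div m < k" using s by (simp add: less_mult_imp_div_less)
  have "(bdiag k m F * bdiag k m H) $$ (s,t) = (\<Sum>r<k*m. bdiag k m F $$ (s,r) * bdiag k m H $$ (r,t))"
    using s t by (simp add: scalar_prod_def atLeast0LessThan)
  also have "\<dots> = (\<Sum>r<k*m. if r div m = s div m then F$$(s mod m, r mod m) *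
      (if s div m = t div m then H$$(r mod m, t mod m) else 0) else 0)"
    by (rule sum.cong[OF refl]) (use s t in \<open>auto simp: bdiag_idx\<close>)
  also have "\<dots> = (\<Sum>r'<m. F$$(s mod m, ((s div m)*m + r') mod m) *
      (if s div m = t div m then H$$(((s div m)*m + r') mod m, t mod m) else 0))"
    by (rule sum_block_sel[OF sk m])
  also have "\<dots> = (\<Sum>r'<m. F$$(s mod m, r') * (if s div m = t div m then H$$(r', t mod m) else 0))"
    by (rule sum.cong[OF refl]) simp
  also have "\<dots> = (if s div m = t div m then (F * H) $$ (s mod m, t mod m) else 0)"
    using F H m by (simp add: scalar_prod_def atLeast0LessThan)
  also have "\<dots> = bdiag k m (F * H) $$ (s,t)" using s t by (simp add: bdiag_idx)
  finally show "(bdiag k m F * bdiag k m H) $$ (s,t) = bdiag k m (F * H) $$ (s,t)" .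
qed (auto simp: bdiag_def)

lemma bdiag_smult_one: fixes c :: "'a::comm_ring_1" assumes m: "0 < m"
  shows "bdiag k m (c \<cdot>\<^sub>m 1\<^sub>m m) = c \<cdot>\<^sub>m 1\<^sub>m (k*m)"
proof (rule eq_matI)
  fix s t assume "s < dim_row (c \<cdot>\<^sub>m 1\<^sub>m (k*m))" "t < dim_col (c \<cdot>\<^sub>m 1\<^sub>m (k*m))"
  then have s: "s < k*m" and t: "t < k*m" by auto
  have "s = t \<longleftrightarrow> s div m = t div m \<and> s mod m = t mod m" by (metis div_mult_mod_eq)
  then show "bdiag k m (c \<cdot>\<^sub>m 1\<^sub>m m) $$ (s,t) = (c \<cdot>\<^sub>m 1\<^sub>m (k*m)) $$ (s,t)"
    using s t m by (simp add: bdiag_idx)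
qed (auto simp: bdiag_def)

lemma adj_skew: fixes K :: "'a::comm_ring_1 mat"
  assumes K: "K \<in> carrier_mat m m" and ev: "even m"
    and sk: "\<And>x y. x < m \<Longrightarrow> y < m \<Longrightarrow> K $$ (y,x) = - K $$ (x,y)"
    and s: "s < m" and t: "t < m"
  shows "adj_mat K $$ (t,s) = - adj_mat K $$ (s,t)"
proof -
  have tr: "transpose_mat (mat_delete K t s) = (-1) \<cdot>\<^sub>m mat_delete K s t"
  proof (rule eq_matI)
    fix i j assume "i < dim_row ((-1) \<cdot>\<^sub>m mat_delete K s t)" "j < dim_col ((-1) \<cdot>\<^sub>m mat_delete K s t)"
    then have i: "i < m - 1" and j: "j < m - 1" using K by auto
    have a: "(if i < s then i else Suc i) < m" "(if j < t then j else Suc j) < m" using i j s t by auto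
    show "transpose_mat (mat_delete K t s) $$ (i,j) = ((-1) \<cdot>\<^sub>m mat_delete K s t) $$ (i,j)"
      using i j K sk[OF a] by (simp add: mat_delete_def)
  qed (use K in auto)
  have md: "mat_delete K t s \<in> carrier_mat (m-1) (m-1)" "mat_delete K s t \<in> carrier_mat (m-1) (m-1)"
    using K by (auto intro: mat_delete_carrier)
  have odd1: "odd (m - 1)" using ev s by (cases m) auto
  have "det (mat_delete K t s) = det (transpose_mat (mat_delete K t s))" using det_transpose[OF md(1)] by simp
  also have "\<dots> = (-1)^(m-1) * det (mat_delete K s t)" unfolding tr using md K by simp
  also have "\<dots> = - det (mat_delete K s t)" using odd1 by simp
  finally have d: "det (mat_delete K t s) = - det (mat_delete K s t)" .
  have "adj_mat K $$ (t,s) = cofactor K s t" using K s t by (simp add: adj_mat_def)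
  moreover have "adj_mat K $$ (s,t) = cofactor K t s" using K s t by (simp add: adj_mat_def)
  ultimately show ?thesis unfolding cofactor_def d by (simp add: add.commute)
qed

lemma alg4: fixes h0 h1 g0 g1 :: "'a::comm_ring_1"
  shows "(\<Sum>t<m. (\<Sum>s<m. (h0 * u0 s + h1 * u1 s) * M s t) * (g0 * v0 t + g1 * v1 t)) =
    h0*g0*(\<Sum>t<m. (\<Sum>s<m. u0 s * M s t) * v0 t) + h0*g1*(\<Sum>t<m. (\<Sum>s<m. u0 s * M s t) * v1 t)
  + h1*g0*(\<Sum>t<m. (\<Sum>s<m. u1 s * M s t) * v0 t) + h1*g1*(\<Sum>t<m. (\<Sum>s<m. u1 s * M s t) * v1 t)"
  by (simp add: algebra_simps sum.distrib sum_distrib_left sum_distrib_right)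


definition hsel :: "nat \<Rightarrow> nat \<Rightarrow> nat \<Rightarrow> int" where
  "hsel i x k = (if hub_img i k = x then 1 else 0)"

definition pat :: "'a::comm_ring_1 \<Rightarrow> nat \<Rightarrow> nat \<Rightarrow> 'a" where
  "pat z x y = [[0,z,z,0],[-z,0,0,-z],[-z,0,0,z],[0,z,-z,0]] ! x ! y"

lemma pat_lin: "x < 4 \<Longrightarrow> y < 4 \<Longrightarrow> d * pat p x y - pat q x y = pat (d * p - q) x y"
  unfolding i4 pat_def by (elim disjE) (simp_all add: algebra_simps)

lemma sum4: fixes f :: "nat \<Rightarrow> 'a::comm_monoid_add" shows "(\<Sum>i<4. f i) = f 0 + f 1 + f 2 + f 3"
  by (simp add: numeral_eq_Suc add.commute add.left_commute)

lemma hub_small: "x < 4 \<Longrightarrow> x = emb G k u \<Longrightarrow> u < 2 \<and> hub_img k u = x"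
  using emb_ge[of u G k] emb_hub[of u G k] by (cases "u < 2") auto

lemma nohub: "k < 4 \<Longrightarrow> u < 2 \<Longrightarrow> w < 2 \<Longrightarrow>
  \<not>(hub_img k u = 0 \<and> hub_img k w = 3) \<and> \<not>(hub_img k u = 3 \<and> hub_img k w = 0) \<and>
  \<not>(hub_img k u = 1 \<and> hub_img k w = 2) \<and> \<not>(hub_img k u = 2 \<and> hub_img k w = 1)"
  unfolding i4 k2 hub_img_def by auto

lemma det2gen: fixes M :: "'a::comm_ring_1 mat" assumes "M \<in> carrier_mat 2 2"
  shows "det M = M$$(0,0)*M$$(1,1) - M$$(0,1)*M$$(1,0)"
proof -
  have "M = mat 2 2 (\<lambda>(i,j). M $$ (i,j))" by (rule eq_matI) (use assms in auto)
  then have "det M = det (mat 2 2 (\<lambda>(i,j). M $$ (i,j)))" by simp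
  then show ?thesis by (simp add: det2)
qed

lemma det4gen: fixes M :: "'a::comm_ring_1 mat" assumes "M \<in> carrier_mat 4 4"
  and "\<And>x y. x < 4 \<Longrightarrow> y < 4 \<Longrightarrow> M $$ (x,y) = pat z x y"
  shows "det M = 4 * z^4"
proof -
  have "M = mat 4 4 (\<lambda>(x,y). [[0,z,z,0],[-z,0,0,-z],[-z,0,0,z],[0,z,-z,0]] ! x ! y)"
    by (rule eq_matI) (use assms in \<open>auto simp: pat_def\<close>)
  then show ?thesis using det4W by simp
qed

context fixes G :: nat assumes G0: "0 < G"
begin

abbreviation "mm \<equiv> nv G - 2"

lemma mm_facts: "2 \<le> mm" "nv G = mm + 2" "nv (Suc G) = 4 + 4*mm" "even mm" "0 < mm"
proof -
  have a: "4 \<le> nv G" "nv (Suc G) = 4 * nv G - 4" "even (nv G)" using nv_ge[OF G0] nv_Suc[OF G0] nv_even[OF G0] by auto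
  then show "2 \<le> mm" "nv G = mm + 2" "nv (Suc G) = 4 + 4*mm" "0 < mm" by auto
  show "even mm" using a by presburger
qed

lemma Kmat_idx: "x < mm \<Longrightarrow> y < mm \<Longrightarrow> Kmat G $$ (x,y) = skewA G $$ (x+2,y+2)"
  by (simp add: Kmat_def)

lemma Kmat_carrier: "Kmat G \<in> carrier_mat mm mm" by (simp add: Kmat_def)

lemma K_anti: "x < mm \<Longrightarrow> y < mm \<Longrightarrow> Kmat G $$ (y,x) = - Kmat G $$ (x,y)"
  using skew_anti[OF G0, of "x+2" "y+2"] mm_facts by (simp add: Kmat_idx)

lemma emb_int: "s' < mm \<Longrightarrow> emb G i (s'+2) = 4 + (i*mm + s')" by (simp add: emb_def)

lemma blk: "s < 4*mm \<Longrightarrow> s = s div mm * mm + s mod mm \<and> s div mm < 4 \<and> s mod mm < mm"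
  using mm_facts(5) div_mult_mod_eq[of s mm] by (simp add: less_mult_imp_div_less)

lemma L_D: assumes s: "s < 4*mm" and t: "t < 4*mm"
  shows "skewA (Suc G) $$ (4+s, 4+t) = (if s div mm = t div mm then Kmat G $$ (s mod mm, t mod mm) else 0)"
proof -
  define i s' j t' where "i = s div mm" "s' = s mod mm" "j = t div mm" "t' = t mod mm"
  have bi: "i < 4" "s' < mm" "j < 4" "t' < mm" using blk[OF s] blk[OF t] by (auto simp: i_s'_j_t'_def)
  have es: "4 + s = emb G i (s'+2)" using blk[OF s] bi emb_int by (simp add: i_s'_j_t'_def)
  have et: "4 + t = emb G j (t'+2)" using blk[OF t] bi emb_int by (simp add: i_s'_j_t'_def)
  have b2: "s'+2 < nv G" "t'+2 < nv G" using bi mm_facts by auto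
  have n4: "4 \<le> nv G" using mm_facts by simp
  show ?thesis
  proof (cases "i = j")
    case True
    have "skewA (Suc G) $$ (4+s, 4+t) = skewA G $$ (s'+2, t'+2)"
      unfolding es et True using skew_same[OF G0 bi(3) _ b2(2), of "s'+2"] b2 True by simp
    then show ?thesis using True bi Kmat_idx by (simp add: i_s'_j_t'_def)
  next
    case False
    have "skewA (Suc G) $$ (4+s, 4+t) = 0"
    proof (rule skew_zero[OF G0])
      show "4 + s < nv (Suc G)" "4 + t < nv (Suc G)" using s t mm_facts by auto
      show "\<not> (\<exists>k<4. \<exists>u<nv G. \<exists>w<nv G. 4 + s = emb G k u \<and> 4 + t = emb G k w)"
      proof
        assume "\<exists>k<4. \<exists>u<nv G. \<exists>w<nv G. 4 + s = emb G k u \<and> 4 + t = emb G k w"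
        then obtain k u w where h: "k < 4" "u < nv G" "w < nv G" "4 + s = emb G k u" "4 + t = emb G k w" by blast
        have "emb G i (s'+2) = emb G k u" using es h by simp
        from emb_cross[OF bi(1) h(1) b2(1) h(2) n4 this] have "i = k" by simp
        moreover have "emb G j (t'+2) = emb G k w" using et h by simp
        from emb_cross[OF bi(3) h(1) b2(2) h(3) n4 this] have "j = k" by simp
        ultimately show False using False by simp
      qed
    qed
    then show ?thesis using False by (simp add: i_s'_j_t'_def)
  qed
qed

lemma L_Q: assumes x: "x < 4" and i: "i < 4" and s: "s' < mm"
  shows "skewA (Suc G) $$ (x, 4 + (i*mm + s')) = hsel i x 0 * skewA G $$ (0, s'+2) + hsel i x 1 * skewA G $$ (1, s'+2)"
proof -
  have e: "4 + (i*mm + s') = emb G i (s'+2)" using emb_int s by simp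
  have b: "s'+2 < nv G" "0 < nv G" "1 < nv G" using s mm_facts by auto
  have n4: "4 \<le> nv G" using mm_facts by simp
  have h01: "hub_img i 0 \<noteq> hub_img i 1" using hub_img_inj[OF i, of 0 1] by auto
  show ?thesis
  proof (cases "x = hub_img i 0")
    case True
    have "skewA (Suc G) $$ (x, 4 + (i*mm + s')) = skewA G $$ (0, s'+2)"
      unfolding e True using skew_same[OF G0 i b(2) b(1)] emb_hub[of 0 G i] by simp
    then show ?thesis using True h01 by (simp add: hsel_def)
  next
    case F0: False
    show ?thesis
    proof (cases "x = hub_img i 1")
      case True
      have "skewA (Suc G) $$ (x, 4 + (i*mm + s')) = skewA G $$ (1, s'+2)"
        unfolding e True using skew_same[OF G0 i b(3) b(1)] emb_hub[of 1 G i] by simp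
      then show ?thesis using True h01 by (simp add: hsel_def)
    next
      case F1: False
      have "skewA (Suc G) $$ (x, 4 + (i*mm + s')) = 0"
      proof (rule skew_zero[OF G0])
        show "x < nv (Suc G)" "4 + (i*mm + s') < nv (Suc G)" using x mm_facts e emb_lt'[OF G0 i b(1)] by auto
        show "\<not> (\<exists>k<4. \<exists>u<nv G. \<exists>w<nv G. x = emb G k u \<and> 4 + (i*mm + s') = emb G k w)"
        proof
          assume "\<exists>k<4. \<exists>u<nv G. \<exists>w<nv G. x = emb G k u \<and> 4 + (i*mm + s') = emb G k w"
          then obtain k u w where h: "k < 4" "u < nv G" "w < nv G" "x = emb G k u" "4 + (i*mm + s') = emb G k w" by blast
          have "emb G i (s'+2) = emb G k w" using e h by simp
          from emb_cross[OF i h(1) b(1) h(3) n4 this] have "i = k" by simp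
          moreover have "u < 2 \<and> hub_img k u = x" using hub_small[OF x h(4)] .
          ultimately show False using F0 F1 k2 by auto
        qed
      qed
      then show ?thesis using F0 F1 by (simp add: hsel_def)
    qed
  qed
qed

lemma L_R: assumes y: "y < 4" and i: "i < 4" and t: "t' < mm"
  shows "skewA (Suc G) $$ (4 + (i*mm + t'), y) = hsel i y 0 * skewA G $$ (t'+2, 0) + hsel i y 1 * skewA G $$ (t'+2, 1)"
proof -
  have b: "4 + (i*mm + t') < nv (Suc G)" "y < nv (Suc G)" using emb_lt'[OF G0 i, of "t'+2"] emb_int t mm_facts y by auto
  have c: "t'+2 < nv G" "0 < nv G" "1 < nv G" using t mm_facts by auto
  have "skewA (Suc G) $$ (4 + (i*mm + t'), y) = - skewA (Suc G) $$ (y, 4 + (i*mm + t'))"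
    using skew_anti[of "Suc G" y "4 + (i*mm + t')"] b by simp
  also have "\<dots> = - (hsel i y 0 * skewA G $$ (0, t'+2) + hsel i y 1 * skewA G $$ (1, t'+2))"
    using L_Q[OF y i t] by simp
  also have "\<dots> = hsel i y 0 * skewA G $$ (t'+2, 0) + hsel i y 1 * skewA G $$ (t'+2, 1)"
    using skew_anti[OF G0 c(2) c(1)] skew_anti[OF G0 c(3) c(1)] by (simp add: algebra_simps)
  finally show ?thesis .
qed

definition FF :: "nat \<Rightarrow> nat \<Rightarrow> int" where
  "FF k l = (\<Sum>t<mm. (\<Sum>s<mm. skewA G $$ (k,s+2) * adj_mat (Kmat G) $$ (s,t)) * skewA G $$ (t+2,l))"

lemma QXR: assumes x: "x < 4" and y: "y < 4"
  shows "(\<Sum>t<4*mm. (\<Sum>s<4*mm. skewA (Suc G) $$ (x,4+s) * bdiag 4 mm (adj_mat (Kmat G)) $$ (s,t)) * skewA (Suc G) $$ (4+t,y))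
  = (\<Sum>i<4. hsel i x 0 * hsel i y 0 * FF 0 0 + hsel i x 0 * hsel i y 1 * FF 0 1
           + hsel i x 1 * hsel i y 0 * FF 1 0 + hsel i x 1 * hsel i y 1 * FF 1 1)"
proof -
  let ?A = "skewA (Suc G)" and ?a = "skewA G" and ?J = "adj_mat (Kmat G)" and ?X = "bdiag 4 mm (adj_mat (Kmat G))"
  have m0: "0 < mm" using mm_facts by simp
  have "(\<Sum>t<4*mm. (\<Sum>s<4*mm. ?A $$ (x,4+s) * ?X $$ (s,t)) * ?A $$ (4+t,y))
     = (\<Sum>i<4. \<Sum>t'<mm. (\<Sum>s<4*mm. ?A $$ (x,4+s) * ?X $$ (s,i*mm+t')) * ?A $$ (4+(i*mm+t'),y))"
    by (rule sum_block_split)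
  also have "\<dots> = (\<Sum>i<4. \<Sum>t'<mm. (\<Sum>s'<mm. (hsel i x 0 * ?a $$ (0, s'+2) + hsel i x 1 * ?a $$ (1, s'+2)) * ?J $$ (s',t'))
       * (hsel i y 0 * ?a $$ (t'+2, 0) + hsel i y 1 * ?a $$ (t'+2, 1)))"
  proof (rule sum.cong[OF refl], rule sum.cong[OF refl])
    fix i t' :: nat assume i: "i \<in> {..<4}" and t: "t' \<in> {..<mm}"
    then have i: "i < 4" and t: "t' < mm" by auto
    have it1: "i*mm+t' < (i+1)*mm" using t by simp
    have it2: "(i+1)*mm \<le> 4*mm" using i by (intro mult_le_mono1) simp
    have it: "i*mm+t' < 4*mm" using it1 it2 by linarith
    have dv: "(i*mm+t') div mm = i" "(i*mm+t') mod mm = t'" using t by auto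
    have "(\<Sum>s<4*mm. ?A $$ (x,4+s) * ?X $$ (s,i*mm+t')) = (\<Sum>s<4*mm. if s div mm = i then ?A $$ (x,4+s) * ?J $$ (s mod mm, t') else 0)"
      by (rule sum.cong[OF refl]) (use it dv in \<open>auto simp: bdiag_idx\<close>)
    also have "\<dots> = (\<Sum>s'<mm. ?A $$ (x, 4 + (i*mm+s')) * ?J $$ ((i*mm+s') mod mm, t'))"
      by (rule sum_block_sel[OF i m0])
    also have "\<dots> = (\<Sum>s'<mm. (hsel i x 0 * ?a $$ (0, s'+2) + hsel i x 1 * ?a $$ (1, s'+2)) * ?J $$ (s',t'))"
      by (rule sum.cong[OF refl]) (use L_Q[OF x i] in auto)
    finally show "(\<Sum>s<4*mm. ?A $$ (x,4+s) * ?X $$ (s,i*mm+t')) * ?A $$ (4+(i*mm+t'),y) =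
      (\<Sum>s'<mm. (hsel i x 0 * ?a $$ (0, s'+2) + hsel i x 1 * ?a $$ (1, s'+2)) * ?J $$ (s',t'))
       * (hsel i y 0 * ?a $$ (t'+2, 0) + hsel i y 1 * ?a $$ (t'+2, 1))"
      using L_R[OF y i t] by simp
  qed
  also have "\<dots> = (\<Sum>i<4. hsel i x 0 * hsel i y 0 * FF 0 0 + hsel i x 0 * hsel i y 1 * FF 0 1
           + hsel i x 1 * hsel i y 0 * FF 1 0 + hsel i x 1 * hsel i y 1 * FF 1 1)"
    unfolding FF_def by (rule sum.cong[OF refl], rule alg4)
  finally show ?thesis .
qed

lemma FF_anti: assumes k: "k < 2" and l: "l < 2" shows "FF l k = - FF k l"
proof -
  let ?a = "skewA G" and ?J = "adj_mat (Kmat G)"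
  have e1: "FF l k = (\<Sum>t<mm. \<Sum>s<mm. ?a $$ (l,s+2) * ?J $$ (s,t) * ?a $$ (t+2,k))"
    unfolding FF_def by (simp add: sum_distrib_right)
  have e2: "FF k l = (\<Sum>t<mm. \<Sum>s<mm. ?a $$ (k,s+2) * ?J $$ (s,t) * ?a $$ (t+2,l))"
    unfolding FF_def by (simp add: sum_distrib_right)
  have e3: "(\<Sum>t<mm. \<Sum>s<mm. ?a $$ (l,s+2) * ?J $$ (s,t) * ?a $$ (t+2,k))
      = (\<Sum>t<mm. \<Sum>s<mm. - (?a $$ (k,t+2) * ?J $$ (t,s) * ?a $$ (s+2,l)))"
  proof (rule sum.cong[OF refl], rule sum.cong[OF refl])
    fix t s :: nat assume "t \<in> {..<mm}" "s \<in> {..<mm}"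
    then have t: "t < mm" and s: "s < mm" by auto
    have b: "s+2 < nv G" "t+2 < nv G" "k < nv G" "l < nv G" using s t k l mm_facts by auto
    have f1: "?a $$ (l,s+2) = - ?a $$ (s+2,l)" using skew_anti[OF G0 b(1) b(4)] .
    have f2: "?a $$ (t+2,k) = - ?a $$ (k,t+2)" using skew_anti[OF G0 b(3) b(2)] .
    have f3: "?J $$ (s,t) = - ?J $$ (t,s)"
      using adj_skew[OF Kmat_carrier mm_facts(4) K_anti t s] by simp
    show "?a $$ (l,s+2) * ?J $$ (s,t) * ?a $$ (t+2,k) = - (?a $$ (k,t+2) * ?J $$ (t,s) * ?a $$ (s+2,l))"
      unfolding f1 f2 f3 by (simp add: algebra_simps)
  qed
  have e4: "(\<Sum>t<mm. \<Sum>s<mm. - (?a $$ (k,t+2) * ?J $$ (t,s) * ?a $$ (s+2,l)))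
     = - (\<Sum>s<mm. \<Sum>t<mm. ?a $$ (k,t+2) * ?J $$ (t,s) * ?a $$ (s+2,l))"
    by (subst sum.swap) (simp add: sum_negf)
  show ?thesis unfolding e1 e3 e4 e2 ..
qed

lemma hv: assumes "i < 4" "k < 2" "l < 2"
  shows "skewA (Suc G) $$ (hub_img i k, hub_img i l) = skewA G $$ (k,l)"
proof -
  have "k < nv G" "l < nv G" using assms mm_facts by auto
  from skew_same[OF G0 assms(1) this] show ?thesis using emb_hub assms by simp
qed

lemma zer: assumes x: "x < 4" and y: "y < 4"
  and nh: "\<And>k u w. k < 4 \<Longrightarrow> u < 2 \<Longrightarrow> w < 2 \<Longrightarrow> \<not> (hub_img k u = x \<and> hub_img k w = y)"
  shows "skewA (Suc G) $$ (x,y) = 0"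
proof (rule skew_zero[OF G0])
  show "x < nv (Suc G)" "y < nv (Suc G)" using x y mm_facts by auto
  show "\<not> (\<exists>k<4. \<exists>u<nv G. \<exists>w<nv G. x = emb G k u \<and> y = emb G k w)"
  proof
    assume "\<exists>k<4. \<exists>u<nv G. \<exists>w<nv G. x = emb G k u \<and> y = emb G k w"
    then obtain k u w where h: "k < 4" "x = emb G k u" "y = emb G k w" by blast
    from hub_small[OF x h(2)] hub_small[OF y h(3)] nh[OF h(1)] show False by blast
  qed
qed

lemma Pval: assumes x: "x < 4" and y: "y < 4"
  shows "skewA (Suc G) $$ (x,y) = pat (skewA G $$ (0,1)) x y"
proof -
  let ?A = "skewA (Suc G)" and ?p = "skewA G $$ (0,1)"
  have a10: "skewA G $$ (1,0) = - ?p" using skew_anti[OF G0, of 0 1] mm_facts by simp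
  have h: "?A $$ (0,1) = ?p" "?A $$ (1,0) = - ?p" "?A $$ (0,2) = ?p" "?A $$ (2,0) = - ?p"
    "?A $$ (2,3) = ?p" "?A $$ (3,2) = - ?p" "?A $$ (3,1) = ?p" "?A $$ (1,3) = - ?p"
    using hv[of 3 0 1] hv[of 3 1 0] hv[of 0 0 1] hv[of 0 1 0] hv[of 1 0 1] hv[of 1 1 0]
      hv[of 2 0 1] hv[of 2 1 0] a10 by (simp_all add: hub_img_def)
  have z1: "?A $$ (0,3) = 0"
  proof (rule zer)
    fix k u w :: nat assume "k < 4" "u < 2" "w < 2"
    from nohub[OF this] show "\<not> (hub_img k u = 0 \<and> hub_img k w = 3)" by (elim conjE)
  qed simp_all
  have z2: "?A $$ (3,0) = 0"
  proof (rule zer)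
    fix k u w :: nat assume "k < 4" "u < 2" "w < 2"
    from nohub[OF this] show "\<not> (hub_img k u = 3 \<and> hub_img k w = 0)" by (elim conjE)
  qed simp_all
  have z3: "?A $$ (1,2) = 0"
  proof (rule zer)
    fix k u w :: nat assume "k < 4" "u < 2" "w < 2"
    from nohub[OF this] show "\<not> (hub_img k u = 1 \<and> hub_img k w = 2)" by (elim conjE)
  qed simp_all
  have z4: "?A $$ (2,1) = 0"
  proof (rule zer)
    fix k u w :: nat assume "k < 4" "u < 2" "w < 2"
    from nohub[OF this] show "\<not> (hub_img k u = 2 \<and> hub_img k w = 1)" by (elim conjE)
  qed simp_all
  note z = z1 z2 z3 z4
  have dg: "?A $$ (z,z) = 0" if "z < 4" for z using skew_diag[of "Suc G" z] that mm_facts by simp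
  show ?thesis using x y h z dg[of 0] dg[of 1] dg[of 2] dg[of 3] unfolding i4 pat_def
    by (elim disjE) simp_all
qed

lemma QXR_pat: assumes x: "x < 4" and y: "y < 4"
  shows "(\<Sum>i<4. hsel i x 0 * hsel i y 0 * FF 0 0 + hsel i x 0 * hsel i y 1 * FF 0 1
           + hsel i x 1 * hsel i y 0 * FF 1 0 + hsel i x 1 * hsel i y 1 * FF 1 1) = pat (FF 0 1) x y"
proof -
  have f: "FF 0 0 = 0" "FF 1 1 = 0" "FF 1 0 = - FF 0 1" using FF_anti[of 0 0] FF_anti[of 1 1] FF_anti[of 0 1] by simp_all
  show ?thesis using x y unfolding sum4 i4 pat_def f
    by (elim disjE) (simp_all add: hsel_def hub_img_def)
qed

lemma step: assumes d0: "det (Kmat G) \<noteq> 0"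
  shows "det (skewA (Suc G)) = 4 * (det (skewA G) * det (Kmat G))^2
       \<and> det (Kmat (Suc G)) = det (Kmat G)^3 * det (skewA G)"
proof -
  let ?a = "skewA G" and ?A = "skewA (Suc G)" and ?K = "Kmat G" and ?J = "adj_mat (Kmat G)"
  define d where "d = det (Kmat G)"
  define z where "z = d * ?a $$ (0,1) - FF 0 1"
  have m0: "0 < mm" using mm_facts by simp
  have Kc: "?K \<in> carrier_mat mm mm" by (rule Kmat_carrier)
  have Jc: "?J \<in> carrier_mat mm mm" and KJ: "?K * ?J = d \<cdot>\<^sub>m 1\<^sub>m mm"
    using adj_mat[OF Kc] unfolding d_def by auto
  let ?H = "mat 2 2 (\<lambda>(k,l). ?a $$ (k,l))" and ?B = "mat 2 mm (\<lambda>(k,s). ?a $$ (k,s+2))"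
    and ?C = "mat mm 2 (\<lambda>(s,l). ?a $$ (s+2,l))"
  have aeq: "four_block_mat ?H ?B ?C ?K = ?a"
  proof (rule eq_matI)
    fix i j assume "i < dim_row ?a" "j < dim_col ?a"
    then have i: "i < 2 + mm" and j: "j < 2 + mm" using mm_facts by auto
    show "four_block_mat ?H ?B ?C ?K $$ (i,j) = ?a $$ (i,j)"
      using i j Kc by (cases "i < 2"; cases "j < 2") (simp_all add: Kmat_idx ss2)
  qed (use mm_facts Kc in auto)
  have sA: "det ?a * d^2 = det (d \<cdot>\<^sub>m ?H - ?B * ?J * ?C) * d"
    using schur_adj[of ?H 2 ?B mm ?C ?K ?J d] Jc Kc KJ unfolding aeq d_def by auto
  have Zc: "d \<cdot>\<^sub>m ?H - ?B * ?J * ?C \<in> carrier_mat 2 2" unfolding carrier_mat_def by simp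
  have Zi: "(d \<cdot>\<^sub>m ?H - ?B * ?J * ?C) $$ (k,l) = d * ?a $$ (k,l) - FF k l" if "k < 2" "l < 2" for k l
    using that Jc by (simp add: FF_def scalar_prod_def atLeast0LessThan)
  have a0: "?a $$ (0,0) = 0" "?a $$ (1,1) = 0" "?a $$ (1,0) = - ?a $$ (0,1)"
    using skew_diag[OF G0, of 0] skew_diag[OF G0, of 1] skew_anti[OF G0, of 0 1] mm_facts by auto
  have f: "FF 0 0 = 0" "FF 1 1 = 0" "FF 1 0 = - FF 0 1" using FF_anti[of 0 0] FF_anti[of 1 1] FF_anti[of 0 1] by simp_all
  have dZ: "det (d \<cdot>\<^sub>m ?H - ?B * ?J * ?C) = z^2"
    unfolding det2gen[OF Zc] using Zi[of 0 0] Zi[of 0 1] Zi[of 1 0] Zi[of 1 1] a0 f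
    by (simp add: z_def power2_eq_square algebra_simps)
  have dz: "det ?a * d = z^2"
  proof -
    have "(det ?a * d) * d = z^2 * d" using sA dZ by (simp add: power2_eq_square algebra_simps)
    then show ?thesis using d0 unfolding d_def by simp
  qed
  let ?P = "mat 4 4 (\<lambda>(x,y). ?A $$ (x,y))" and ?Q = "mat 4 (4*mm) (\<lambda>(x,s). ?A $$ (x,4+s))"
    and ?R = "mat (4*mm) 4 (\<lambda>(s,y). ?A $$ (4+s,y))" and ?D = "bdiag 4 mm ?K" and ?X = "bdiag 4 mm ?J"
  have Dv: "?A $$ (4+s,4+t) = ?D $$ (s,t)" if "s < 4*mm" "t < 4*mm" for s t
    using L_D[OF that] that by (simp add: bdiag_idx)
  have Aeq: "four_block_mat ?P ?Q ?R ?D = ?A"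
  proof (rule eq_matI)
    fix i j assume "i < dim_row ?A" "j < dim_col ?A"
    then have i: "i < 4 + 4*mm" and j: "j < 4 + 4*mm" using mm_facts by auto
    show "four_block_mat ?P ?Q ?R ?D $$ (i,j) = ?A $$ (i,j)"
    proof (cases "i < 4"; cases "j < 4")
      assume "\<not> i < 4" "\<not> j < 4"
      then show ?thesis using i j Dv[of "i-4" "j-4"] by (simp add: s4)
    qed (use i j in \<open>simp_all add: s4\<close>)
  qed (use mm_facts in auto)
  have DX: "?D * ?X = d \<cdot>\<^sub>m 1\<^sub>m (4*mm)"
    using bdiag_mult[OF Kc Jc m0, of 4] KJ bdiag_smult_one[OF m0, of 4 d] by simp
  have dD: "det ?D = d^4" using det_bdiag[OF Kc m0, of 4] unfolding d_def by simp
  have sB: "det ?A * d^4 = det (d \<cdot>\<^sub>m ?P - ?Q * ?X * ?R) * d^4"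
    using schur_adj[of ?P 4 ?Q "4*mm" ?R ?D ?X d] DX dD unfolding Aeq by auto
  have d4: "d^4 \<noteq> 0" using d0 unfolding d_def by simp
  have Wc: "d \<cdot>\<^sub>m ?P - ?Q * ?X * ?R \<in> carrier_mat 4 4" unfolding carrier_mat_def by simp
  have Wi: "(d \<cdot>\<^sub>m ?P - ?Q * ?X * ?R) $$ (x,y) = pat z x y" if x: "x < 4" and y: "y < 4" for x y
  proof -
    have "(?Q * ?X * ?R) $$ (x,y) = (\<Sum>t<4*mm. (\<Sum>s<4*mm. ?A $$ (x,4+s) * ?X $$ (s,t)) * ?A $$ (4+t,y))"
      using x y by (simp add: scalar_prod_def atLeast0LessThan)
    also have "\<dots> = pat (FF 0 1) x y" using QXR[OF x y] QXR_pat[OF x y] by simp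
    finally have "(?Q * ?X * ?R) $$ (x,y) = pat (FF 0 1) x y" .
    then have "(d \<cdot>\<^sub>m ?P - ?Q * ?X * ?R) $$ (x,y) = d * pat (?a $$ (0,1)) x y - pat (FF 0 1) x y"
      using x y Pval[OF x y] by simp
    then show ?thesis using pat_lin[OF x y] unfolding z_def by simp
  qed
  have dA: "det ?A = 4 * z^4" using sB d4 det4gen[OF Wc Wi] by simp
  let ?P2 = "mat 2 2 (\<lambda>(x,y). ?A $$ (x+2,y+2))" and ?Q2 = "mat 2 (4*mm) (\<lambda>(x,s). ?A $$ (x+2,4+s))"
    and ?R2 = "mat (4*mm) 2 (\<lambda>(s,y). ?A $$ (4+s,y+2))"
  have Keq: "four_block_mat ?P2 ?Q2 ?R2 ?D = Kmat (Suc G)"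
  proof (rule eq_matI)
    fix i j assume "i < dim_row (Kmat (Suc G))" "j < dim_col (Kmat (Suc G))"
    then have i: "i < 2 + 4*mm" and j: "j < 2 + 4*mm" using mm_facts by (auto simp: Kmat_def)
    have Kv: "Kmat (Suc G) $$ (i,j) = ?A $$ (i+2,j+2)" using i j mm_facts by (simp add: Kmat_def)
    show "four_block_mat ?P2 ?Q2 ?R2 ?D $$ (i,j) = Kmat (Suc G) $$ (i,j)"
      unfolding Kv
    proof (cases "i < 2"; cases "j < 2")
      assume a: "\<not> i < 2" "\<not> j < 2"
      then show "four_block_mat ?P2 ?Q2 ?R2 ?D $$ (i,j) = ?A $$ (i+2,j+2)"
        using i j Dv[of "i-2" "j-2"] by simp
    next
      assume a: "i < 2" "\<not> j < 2"
      then have "4 + (j - 2) = j + 2" by simp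
      then show "four_block_mat ?P2 ?Q2 ?R2 ?D $$ (i,j) = ?A $$ (i+2,j+2)" using a i j by simp
    next
      assume a: "\<not> i < 2" "j < 2"
      then have "4 + (i - 2) = i + 2" by simp
      then show "four_block_mat ?P2 ?Q2 ?R2 ?D $$ (i,j) = ?A $$ (i+2,j+2)" using a i j by simp
    qed (use i j in simp)
  qed (use mm_facts in \<open>auto simp: Kmat_def\<close>)
  have sC: "det (Kmat (Suc G)) * d^2 = det (d \<cdot>\<^sub>m ?P2 - ?Q2 * ?X * ?R2) * d^4"
    using schur_adj[of ?P2 2 ?Q2 "4*mm" ?R2 ?D ?X d] DX dD unfolding Keq by auto
  have W2c: "d \<cdot>\<^sub>m ?P2 - ?Q2 * ?X * ?R2 \<in> carrier_mat 2 2" unfolding carrier_mat_def by simp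
  have W2i: "(d \<cdot>\<^sub>m ?P2 - ?Q2 * ?X * ?R2) $$ (x,y) = pat z (x+2) (y+2)" if x: "x < 2" and y: "y < 2" for x y
  proof -
    have x2: "x+2 < 4" and y2: "y+2 < 4" using x y by auto
    have "(?Q2 * ?X * ?R2) $$ (x,y) = (\<Sum>t<4*mm. (\<Sum>s<4*mm. ?A $$ (x+2,4+s) * ?X $$ (s,t)) * ?A $$ (4+t,y+2))"
      using x y by (simp add: scalar_prod_def atLeast0LessThan)
    also have "\<dots> = pat (FF 0 1) (x+2) (y+2)" using QXR[OF x2 y2] QXR_pat[OF x2 y2] by simp
    finally have "(?Q2 * ?X * ?R2) $$ (x,y) = pat (FF 0 1) (x+2) (y+2)" .
    then have "(d \<cdot>\<^sub>m ?P2 - ?Q2 * ?X * ?R2) $$ (x,y) = d * pat (?a $$ (0,1)) (x+2) (y+2) - pat (FF 0 1) (x+2) (y+2)"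
      using x y Pval[OF x2 y2] by simp
    then show ?thesis using pat_lin[OF x2 y2] unfolding z_def by simp
  qed
  have dW2: "det (d \<cdot>\<^sub>m ?P2 - ?Q2 * ?X * ?R2) = z^2"
    unfolding det2gen[OF W2c] using W2i[of 0 0] W2i[of 0 1] W2i[of 1 0] W2i[of 1 1]
    by (simp add: pat_def power2_eq_square)
  have dK: "det (Kmat (Suc G)) = z^2 * d^2"
  proof -
    have "det (Kmat (Suc G)) * d^2 = (z^2 * d^2) * d^2" using sC dW2 by (simp add: algebra_simps power_add[symmetric])
    then show ?thesis using d0 unfolding d_def by simp
  qed
  show ?thesis
  proof
    show "det ?A = 4 * (det ?a * det ?K)^2" using dA dz unfolding d_def[symmetric]
      by (simp add: power2_eq_square power4_eq_xxxx)
    show "det (Kmat (Suc G)) = det ?K ^ 3 * det ?a" using dK dz unfolding d_def[symmetric]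
      by (simp add: power2_eq_square power3_eq_cube algebra_simps)
  qed
qed

end


lemma base_A: "det (skewA (Suc 0)) = 4"
proof -
  have c: "skewA (Suc 0) \<in> carrier_mat 4 4" using skewA_carrier[of "Suc 0"] by simp
  have v: "skewA (Suc 0) $$ (x,y) = (if arc (Suc 0) x y then 1 else if arc (Suc 0) y x then -1 else 0)"
    if "x < 4" "y < 4" for x y using that skewA_idx[of x "Suc 0" y] by simp
  have "skewA (Suc 0) $$ (x,y) = pat 1 x y" if "x < 4" "y < 4" for x y
    using v[OF that] that unfolding arc1 i4 pat_def by (elim disjE) simp_all
  from det4gen[OF c this] show ?thesis by simp
qed

lemma base_K: "det (Kmat (Suc 0)) = 1"
proof -
  have c: "Kmat (Suc 0) \<in> carrier_mat 2 2" by (simp add: Kmat_def)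
  have e: "Kmat (Suc 0) $$ (x,y) = skewA (Suc 0) $$ (x+2,y+2)" if "x < 2" "y < 2" for x y
    using that by (simp add: Kmat_def)
  have "skewA (Suc 0) $$ (x,y) = (if arc (Suc 0) x y then 1 else if arc (Suc 0) y x then -1 else 0)"
    if "x < 4" "y < 4" for x y using that skewA_idx[of x "Suc 0" y] by simp
  then have v: "skewA (Suc 0) $$ (2,2) = 0" "skewA (Suc 0) $$ (2,3) = 1" "skewA (Suc 0) $$ (3,2) = -1"
    "skewA (Suc 0) $$ (3,3) = 0" unfolding arc1 by simp_all
  show ?thesis unfolding det2gen[OF c] using e[of 0 0] e[of 0 1] e[of 1 0] e[of 1 1] v by (simp add: numeral_eq_Suc)
qed

lemma nonzero: "0 < G \<Longrightarrow> det (skewA G) \<noteq> 0 \<and> det (Kmat G) \<noteq> 0"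
proof (induction G)
  case (Suc G)
  show ?case
  proof (cases "G = 0")
    case True then show ?thesis using base_A base_K by simp
  next
    case False
    then have G0: "0 < G" by simp
    have IH: "det (skewA G) \<noteq> 0" "det (Kmat G) \<noteq> 0" using Suc.IH G0 by auto
    from step[OF G0 IH(2)] IH show ?thesis by simp
  qed
qed simp

theorem lemma8:
  fixes g :: nat
  assumes "g \<ge> 1"
  shows "det (skewA (g + 1)) = 4 * (det (skewA g))^2 * (det (Kmat g))^2"
proof -
  have G0: "0 < g" using assms by simp
  have "det (skewA (Suc g)) = 4 * (det (skewA g) * det (Kmat g))^2"
    using step[OF G0 conjunct2[OF nonzero[OF G0]]] by simp
  then show ?thesis by (simp add: power_mult_distrib)
qed

end
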